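(* In the setup described in the context, let $x\in T_pM$ induce a $Q$-basis. Let $\psi=\angle(x,Q^2x)$ be the $g$-angle, and assume $\psi\neq\pi/2$. Then $$\tilde r(x)=\frac{1}{\cos\psi}\,r(x)+\frac{1}{8\cos\psi}(3\tilde\tau^*+\tilde\tau-3\tau-\tau^* )+\frac18(3\tilde\tau+\tilde\tau^*-3\tau^*-\tau).$$
   Context: Let $M$ be a 3-dimensional smooth manifold. Fix a coordinate chart $(x^1,x^2,x^3)$ with coordinate vector fields $\partial_i$. Structures: - $g$ is a Riemannian metric with $g(\partial_1,\partial_1)=g(\partial_2,\partial_2)=A$, $g(\partial_3,\partial_3)=B$ and $g(\partial_i,\partial_j)=0$ for $i\ne j$. Here $A,B$ are smooth positive functions. - $Q$ is the $(1,1)$-tensor field with $Q\partial_1=\partial_2$, $Q\partial_2=-\partial_1$, $Q\partial_3=\partial_3$. - $P=Q^2$ and $\tilde g(x,y)=g(x,Py)$. Connections and curvature: - $\nabla$ and $\tilde\nabla$ are the Levi-Civita connections of $g$ and $\tilde g$. - $R(x,y)z=\nabla_x\nabla_yz-\nabla_y\nabla_xz-\nabla_{[x,y]}z$ and $R(x,y,z,t)=g(R(x,y)z,t)$. Analogously $\tilde R(x,y,z,t)=\tilde g(\tilde R(x,y)z,t)$. Ricci tensors and scalar quantities: - $\rho(y,z)=g^{ij}R(e_i,y,z,e_j)$ and $\tilde\rho(y,z)=\tilde g^{ij}\tilde R(e_i,y,z,e_j)$. - $\tau=g^{ij}\rho_{ij}$, $\tau^*=\tilde g^{ij}\rho_{ij}$,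 $\tilde\tau=\tilde g^{ij}\tilde\rho_{ij}$, $\tilde\tau^*=g^{ij}\tilde\rho_{ij}$. Ricci curvatures in a direction: - $r(x)=\rho(x,x)/g(x,x)$ and $\tilde r(x)=\tilde\rho(x,x)/\tilde g(x,x)$. Angles and $Q$-bases: - The $g$-angle is defined by $\cos\angle(u,v)=g(u,v)/\sqrt{g(u,u)g(v,v)}$. - A vector $x$ induces a $Q$-basis if $\{x,Qx,Q^2x\}$ is a basis of $T_pM$. *)

theory Defs
  imports "HOL-Analysis.Analysis"
begin

text \<open>We work in the coordinate chart: its domain is an open set U of R^3 (points of type
  real^3); tangent vectors at a point are given by their components w.r.t. the coordinate
  vector fields. The coordinate indices 1,2,3 are the three (distinct) elements 1,2,3 of the
  index type 3 (note that 3 = 0 in that type, but this is just a label).\<close>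

type_synonym pt = "real^3"

definition pd :: "3 \<Rightarrow> (pt \<Rightarrow> real) \<Rightarrow> pt \<Rightarrow> real" where
  "pd i f p = deriv (\<lambda>t. f (p + t *\<^sub>R axis i 1)) 0"

fun ipd :: "3 list \<Rightarrow> (pt \<Rightarrow> real) \<Rightarrow> pt \<Rightarrow> real" where
  "ipd [] f = f"
| "ipd (i # ks) f = pd i (ipd ks f)"

definition smooth_on :: "pt set \<Rightarrow> (pt \<Rightarrow> real) \<Rightarrow> bool" where
  "smooth_on U f \<longleftrightarrow> (\<forall>ks. continuous_on U (ipd ks f) \<and>
     (\<forall>i p. p \<in> U \<longrightarrow>
        ((\<lambda>t. ipd ks f (p + t *\<^sub>R axis i 1)) has_real_derivative ipd (i # ks) f p) (at 0)))"

text \<open>Matrices: column j holds the components of the image of the j-th coordinate vector.\<close>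
definition Qm :: "real^3^3" where
  "Qm = (\<chi> k j. if k = 2 \<and> j = 1 then 1 else if k = 1 \<and> j = 2 then -1
                 else if k = 3 \<and> j = 3 then 1 else 0)"

definition Pm :: "real^3^3" where
  "Pm = Qm ** Qm"

definition gmet :: "(pt \<Rightarrow> real) \<Rightarrow> (pt \<Rightarrow> real) \<Rightarrow> pt \<Rightarrow> real^3^3" where
  "gmet A B p = (\<chi> i j. if i = j then (if i = 3 then B p else A p) else 0)"

text \<open>tilde g(x,y) = g(x, P y), i.e. tilde g_ij = sum_k g_ik P_kj.\<close>
definition tmet :: "(pt \<Rightarrow> real) \<Rightarrow> (pt \<Rightarrow> real) \<Rightarrow> pt \<Rightarrow> real^3^3" where
  "tmet A B p = gmet A B p ** Pm"

definition bil :: "real^3^3 \<Rightarrow> real^3 \<Rightarrow> real^3 \<Rightarrow> real" where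
  "bil M x y = x \<bullet> (M *v y)"

definition ginv :: "(pt \<Rightarrow> real^3^3) \<Rightarrow> pt \<Rightarrow> real^3^3" where
  "ginv G p = matrix_inv (G p)"

text \<open>Christoffel symbols of the Levi-Civita connection: nabla_{d_i} d_j = sum_k chr G p k i j d_k.\<close>
definition chr :: "(pt \<Rightarrow> real^3^3) \<Rightarrow> pt \<Rightarrow> 3 \<Rightarrow> 3 \<Rightarrow> 3 \<Rightarrow> real" where
  "chr G p k i j = (1/2) * (\<Sum>l\<in>UNIV. ginv G p $ k $ l *
      (pd i (\<lambda>q. G q $ j $ l) p + pd j (\<lambda>q. G q $ i $ l) p - pd l (\<lambda>q. G q $ i $ j) p))"

text \<open>R(d_i,d_j)d_k = nabla_i nabla_j d_k - nabla_j nabla_i d_k = sum_l curv G p i j k l d_l.\<close>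
definition curv :: "(pt \<Rightarrow> real^3^3) \<Rightarrow> pt \<Rightarrow> 3 \<Rightarrow> 3 \<Rightarrow> 3 \<Rightarrow> 3 \<Rightarrow> real" where
  "curv G p i j k l =
     pd i (\<lambda>q. chr G q l j k) p - pd j (\<lambda>q. chr G q l i k) p
     + (\<Sum>m\<in>UNIV. chr G p m j k * chr G p l i m - chr G p m i k * chr G p l j m)"

definition curv4 :: "(pt \<Rightarrow> real^3^3) \<Rightarrow> pt \<Rightarrow> 3 \<Rightarrow> 3 \<Rightarrow> 3 \<Rightarrow> 3 \<Rightarrow> real" where
  "curv4 G p i j k t = (\<Sum>l\<in>UNIV. curv G p i j k l * G p $ l $ t)"

definition ricci :: "(pt \<Rightarrow> real^3^3) \<Rightarrow> pt \<Rightarrow> real^3^3" where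
  "ricci G p = (\<chi> a b. \<Sum>i\<in>UNIV. \<Sum>j\<in>UNIV. ginv G p $ i $ j * curv4 G p i a b j)"

definition contr :: "real^3^3 \<Rightarrow> real^3^3 \<Rightarrow> real" where
  "contr H T = (\<Sum>i\<in>UNIV. \<Sum>j\<in>UNIV. H $ i $ j * T $ i $ j)"

definition ricdir :: "(pt \<Rightarrow> real^3^3) \<Rightarrow> pt \<Rightarrow> real^3 \<Rightarrow> real" where
  "ricdir G p x = bil (ricci G p) x x / bil (G p) x x"

definition gangle :: "real^3^3 \<Rightarrow> real^3 \<Rightarrow> real^3 \<Rightarrow> real" where
  "gangle M u v = arccos (bil M u v / sqrt (bil M u u * bil M v v))"

definition Q_basis :: "real^3 \<Rightarrow> bool" where
  "Q_basis x \<longleftrightarrow> (let S = {x, Qm *v x, Pm *v x} in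
      card S = 3 \<and> independent S \<and> span S = UNIV)"

end

theory Submission
  imports Defs
begin

definition dg :: "(pt \<Rightarrow> 3 \<Rightarrow> real) \<Rightarrow> pt \<Rightarrow> real^3^3" where
  "dg D q = (\<chi> i j. if i = j then D q i else 0)"

lemma diag_inv:
  fixes M N :: "real^3^3"
  assumes "M ** N = mat 1" "N ** M = mat 1"
  shows "matrix_inv M = N"
proof -
  have "\<exists>A'. M ** A' = mat 1 \<and> A' ** M = mat 1" using assms by blast
  then have h: "M ** matrix_inv M = mat 1 \<and> matrix_inv M ** M = mat 1"
    unfolding matrix_inv_def by (rule someI_ex)
  have "matrix_inv M = matrix_inv M ** (M ** N)" using assms by (simp add: matrix_mul_rid)
  also have "\<dots> = (matrix_inv M ** M) ** N" by (simp add: matrix_mul_assoc)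
  also have "\<dots> = N" using h by (simp add: matrix_mul_lid)
  finally show ?thesis .
qed

lemma ginv_dg:
  assumes "\<And>i. D q i \<noteq> 0"
  shows "ginv (dg D) q = (\<chi> i j. if i = j then 1 / D q i else 0)"
  unfolding ginv_def
  apply (rule diag_inv)
  using assms by (auto simp: dg_def matrix_matrix_mult_def vec_eq_iff mat_def sum_3 forall_3)

lemma pd_const0: "pd i (\<lambda>q. 0) p = 0"
  by (simp add: pd_def)

lemma pd_dg: "pd i (\<lambda>q. dg D q $ j $ l) q = (if j = l then pd i (\<lambda>q. D q j) q else 0)"
  by (simp add: dg_def pd_const0)

lemma chr_dg:
  assumes "\<And>i. D q i \<noteq> 0"
  shows "chr (dg D) q k i j = (1 / (2 * D q k)) *
     ((if j = k then pd i (\<lambda>q. D q k) q else 0) + (if i = k then pd j (\<lambda>q. D q k) q else 0)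
      - (if i = j then pd k (\<lambda>q. D q i) q else 0))"
proof -
  have e: "\<And>c f. (\<Sum>l\<in>UNIV. (\<chi> i j. if i = j then 1 / D q i else 0) $ k $ l * f l) = 1 / D q k * f k"
    by (simp add: if_distrib[where f="\<lambda>x. x * _"] cong: if_cong)
  show ?thesis
    unfolding chr_def ginv_dg[of D q, OF assms] pd_dg e
    by (auto simp: field_simps)
qed

lemma ricci_dg:
  assumes "\<And>i. D p i \<noteq> 0"
  shows "ricci (dg D) p $ a $ b = (\<Sum>i\<in>UNIV. curv (dg D) p i a b i)"
  unfolding ricci_def curv4_def ginv_dg[of D p, OF assms]
  using assms by (simp add: dg_def sum_3)

definition cf :: "real \<Rightarrow> real \<Rightarrow> (3 \<Rightarrow> real) \<Rightarrow> (3 \<Rightarrow> real) \<Rightarrow> 3 \<Rightarrow> 3 \<Rightarrow> 3 \<Rightarrow> real" where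
  "cf a b Ad Bd k i j = (1 / (2 * (if k = 3 then b else a))) *
     ((if j = k then (if k = 3 then Bd i else Ad i) else 0)
      + (if i = k then (if k = 3 then Bd j else Ad j) else 0)
      - (if i = j then (if i = 3 then Bd k else Ad k) else 0))"

definition flip :: "3 \<Rightarrow> 3 \<Rightarrow> 3 \<Rightarrow> bool" where
  "flip k i j \<longleftrightarrow> (k = 3 \<and> i = 1 \<and> j = 1) \<or> (k = 3 \<and> i = 2 \<and> j = 2)
     \<or> (k = 1 \<and> i = 3 \<and> j = 3) \<or> (k = 2 \<and> i = 3 \<and> j = 3)"

lemma cf_flip:
  assumes "a \<noteq> 0" "b \<noteq> 0"
  shows "cf (-a) b (\<lambda>i. - Ad i) Bd k i j = (if flip k i j then -1 else 1) * cf a b Ad Bd k i j"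
  using exhaust_3[of k] exhaust_3[of i] exhaust_3[of j] assms
  by (auto simp: cf_def flip_def field_simps)

definition quad :: "real \<Rightarrow> real \<Rightarrow> (3 \<Rightarrow> real) \<Rightarrow> (3 \<Rightarrow> real) \<Rightarrow> 3 \<Rightarrow> 3 \<Rightarrow> real" where
  "quad a b Ad Bd x y = (\<Sum>i\<in>UNIV. \<Sum>m\<in>UNIV. cf a b Ad Bd m x y * cf a b Ad Bd i i m
      - cf a b Ad Bd m i y * cf a b Ad Bd i x m)"

lemma quad_off:
  assumes "a \<noteq> 0" "b \<noteq> 0" "x \<noteq> y"
  shows "quad (-a) b (\<lambda>i. - Ad i) Bd x y = quad a b Ad Bd x y"
  using exhaust_3[of x] exhaust_3[of y] assms
  by (auto simp: quad_def cf_def sum_3 field_simps)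

lemma quad_diag:
  assumes "a \<noteq> 0" "b \<noteq> 0"
  shows "quad (-a) b (\<lambda>i. - Ad i) Bd 1 1 - quad a b Ad Bd 1 1
       = quad (-a) b (\<lambda>i. - Ad i) Bd 2 2 - quad a b Ad Bd 2 2"
  using assms
  by (simp add: quad_def cf_def sum_3 field_simps)

lemma pd_local:
  assumes "open U" "p \<in> U" "\<forall>q\<in>U. f q = h q"
  shows "pd i f p = pd i h p"
  unfolding pd_def
proof (rule deriv_cong_ev[OF _ refl])
  let ?c = "\<lambda>t::real. p + t *\<^sub>R axis i 1"
  have "continuous_on UNIV ?c" by (intro continuous_intros)
  then have "open (?c -` U)" using assms(1) by (simp add: open_vimage)
  moreover have "(0::real) \<in> ?c -` U" using assms(2) by simp
  ultimately show "\<forall>\<^sub>F t in nhds 0. f (?c t) = h (?c t)"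
    unfolding eventually_nhds using assms(3) by blast
qed

lemma pd_neg:
  assumes "smooth_on U A" "q \<in> U"
  shows "pd i (\<lambda>q. - A q) q = - pd i A q"
proof -
  have "((\<lambda>t. ipd [] A (q + t *\<^sub>R axis i 1)) has_real_derivative ipd [i] A q) (at 0)"
    using assms unfolding smooth_on_def by blast
  then have d: "((\<lambda>t. A (q + t *\<^sub>R axis i 1)) has_real_derivative pd i A q) (at 0)" by simp
  have "((\<lambda>t. - A (q + t *\<^sub>R axis i 1)) has_real_derivative - pd i A q) (at 0)"
    using DERIV_minus[OF d] .
  then show ?thesis unfolding pd_def by (rule DERIV_imp_deriv)
qed

lemma curv_sum:
  "(\<Sum>i\<in>UNIV. curv G p i a b i) = (\<Sum>i\<in>UNIV. pd i (\<lambda>q. chr G q i a b) p)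
     - (\<Sum>i\<in>UNIV. pd a (\<lambda>q. chr G q i i b) p)
     + (\<Sum>i\<in>UNIV. \<Sum>m\<in>UNIV. chr G p m a b * chr G p i i m - chr G p m i b * chr G p i a m)"
  unfolding curv_def by (simp add: sum.distrib sum_subtractf)

lemma flip_ii: "\<not> flip i i b"
  unfolding flip_def by auto

lemma flip_off: "a \<noteq> b \<Longrightarrow> \<not> flip k a b"
  unfolding flip_def by auto

lemma main_ricci:
  assumes U: "open U" "p \<in> U"
    and sA: "smooth_on U A" and sB: "smooth_on U B"
    and pA: "\<forall>q\<in>U. A q > 0" and pB: "\<forall>q\<in>U. B q > 0"
  defines "D1 \<equiv> \<lambda>q (i::3). if i = 3 then B q else A q"
    and "D2 \<equiv> \<lambda>q (i::3). if i = 3 then B q else - A q"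
  shows "\<exists>u w. ricci (dg D2) p = ricci (dg D1) p + (\<chi> a b. if a = b then (if a = 3 then w else u) else 0)"
proof -
  have nz1: "\<And>i. D1 q i \<noteq> 0" if "q \<in> U" for q using pA pB that by (auto simp: D1_def)
  have nz2: "\<And>i. D2 q i \<noteq> 0" if "q \<in> U" for q using pA pB that by (auto simp: D2_def)
  have pd1: "pd i (\<lambda>q. D1 q k) q = (if k = 3 then pd i B q else pd i A q)" for i k q
    by (simp add: D1_def)
  have pd2: "pd i (\<lambda>q. D2 q k) q = (if k = 3 then pd i B q else - pd i A q)" if "q \<in> U" for i k q
    using pd_neg[OF sA that] by (simp add: D2_def)
  have c1: "chr (dg D1) q k i j = cf (A q) (B q) (\<lambda>i. pd i A q) (\<lambda>i. pd i B q) k i j"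
    if "q \<in> U" for q k i j
    unfolding chr_dg[of D1 q, OF nz1[OF that]] pd1 cf_def by (simp add: D1_def)
  have c2: "chr (dg D2) q k i j = cf (- A q) (B q) (\<lambda>i. - pd i A q) (\<lambda>i. pd i B q) k i j"
    if "q \<in> U" for q k i j
    unfolding chr_dg[of D2 q, OF nz2[OF that]] pd2[OF that] cf_def by (simp add: D2_def)
  have c21: "chr (dg D2) q k i j = (if flip k i j then -1 else 1) * chr (dg D1) q k i j"
    if "q \<in> U" for q k i j
    unfolding c1[OF that] c2[OF that] using pA pB that by (intro cf_flip) auto
  have eqpd: "pd l (\<lambda>q. chr (dg D2) q k i j) p = pd l (\<lambda>q. chr (dg D1) q k i j) p"
    if "\<not> flip k i j" for l k i j
    using c21 that by (intro pd_local[OF U]) auto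
  have e1: "pd l (\<lambda>q. chr (dg D1) q 3 1 1) p = pd l (\<lambda>q. chr (dg D1) q 3 2 2) p" for l
    by (intro pd_local[OF U]) (auto simp: c1 cf_def)
  have e2: "pd l (\<lambda>q. chr (dg D2) q 3 1 1) p = pd l (\<lambda>q. chr (dg D2) q 3 2 2) p" for l
    by (intro pd_local[OF U]) (auto simp: c2 cf_def)
  define a where "a = A p"
  define b where "b = B p"
  define Ad where "Ad = (\<lambda>i. pd i A p)"
  define Bd where "Bd = (\<lambda>i. pd i B p)"
  have ab: "a \<noteq> 0" "b \<noteq> 0" using pA pB U by (auto simp: a_def b_def)
  have r1: "ricci (dg D1) p $ x $ y = (\<Sum>i\<in>UNIV. pd i (\<lambda>q. chr (dg D1) q i x y) p)
     - (\<Sum>i\<in>UNIV. pd x (\<lambda>q. chr (dg D1) q i i y) p) + quad a b Ad Bd x y" for x y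
    unfolding ricci_dg[of D1 p, OF nz1[OF U(2)]] curv_sum quad_def
    by (simp add: c1[OF U(2)] a_def b_def Ad_def Bd_def)
  have r2: "ricci (dg D2) p $ x $ y = (\<Sum>i\<in>UNIV. pd i (\<lambda>q. chr (dg D2) q i x y) p)
     - (\<Sum>i\<in>UNIV. pd x (\<lambda>q. chr (dg D2) q i i y) p) + quad (-a) b (\<lambda>i. - Ad i) Bd x y" for x y
    unfolding ricci_dg[of D2 p, OF nz2[OF U(2)]] curv_sum quad_def
    by (simp add: c2[OF U(2)] a_def b_def Ad_def Bd_def)
  have off: "ricci (dg D2) p $ x $ y = ricci (dg D1) p $ x $ y" if "x \<noteq> y" for x y
    unfolding r1 r2 quad_off[OF ab that] using eqpd flip_off[OF that] flip_ii by simp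
  have f1: "flip 3 1 1" "flip 3 2 2" "\<not> flip 1 1 1" "\<not> flip 2 1 1" "\<not> flip 1 2 2" "\<not> flip 2 2 2"
    by (auto simp: flip_def)
  have d12: "ricci (dg D2) p $ 1 $ 1 - ricci (dg D1) p $ 1 $ 1 = ricci (dg D2) p $ 2 $ 2 - ricci (dg D1) p $ 2 $ 2"
    unfolding r1 r2 using quad_diag[OF ab, of Ad Bd] eqpd[OF flip_ii] eqpd[OF f1(3)] eqpd[OF f1(4)]
      eqpd[OF f1(5)] eqpd[OF f1(6)] e1 e2
    by (simp add: sum_3)
  show ?thesis
    apply (rule exI[of _ "ricci (dg D2) p $ 1 $ 1 - ricci (dg D1) p $ 1 $ 1"])
    apply (rule exI[of _ "ricci (dg D2) p $ 3 $ 3 - ricci (dg D1) p $ 3 $ 3"])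
    using off d12 by (auto simp: vec_eq_iff forall_3)
qed

lemma gmet_dg: "gmet A B = dg (\<lambda>q (i::3). if i = 3 then B q else A q)"
  by (auto simp: gmet_def dg_def fun_eq_iff vec_eq_iff)

lemma Pm_eq: "Pm = (\<chi> i j. if i = j then (if i = 3 then 1 else -1) else 0)"
  by (simp add: Pm_def Qm_def matrix_matrix_mult_def vec_eq_iff forall_3 sum_3)

lemma tmet_dg: "tmet A B = dg (\<lambda>q (i::3). if i = 3 then B q else - A q)"
  by (auto simp: tmet_def gmet_def Pm_eq dg_def fun_eq_iff vec_eq_iff matrix_matrix_mult_def sum_3 forall_3)


lemma final_alg:
  fixes a b n m u w X r1 r2 r3 :: real
  assumes "a \<noteq> 0" "b \<noteq> 0" "-a*n+b*m \<noteq> 0" "a*n+b*m \<noteq> 0"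
  shows "(X + u * n + w * m) / (-a*n+b*m) = 1 / ((-a*n+b*m) / (a*n+b*m)) * (X / (a*n+b*m))
      + 1 / (8 * ((-a*n+b*m) / (a*n+b*m))) * (3 * ((r1+u) / a + (r2+u) / a + (r3+w) / b)
            + (- (r1+u) / a - (r2+u) / a + (r3+w) / b)
            - 3 * (r1 / a + r2 / a + r3 / b) - (- r1 / a - r2 / a + r3 / b))
      + 1 / 8 * (3 * (- (r1+u) / a - (r2+u) / a + (r3+w) / b)
            + ((r1+u) / a + (r2+u) / a + (r3+w) / b)
            - 3 * (- r1 / a - r2 / a + r3 / b) - (r1 / a + r2 / a + r3 / b))"
proof -
  have h1: "3 * ((r1+u) / a + (r2+u) / a + (r3+w) / b)
            + (- (r1+u) / a - (r2+u) / a + (r3+w) / b)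
            - 3 * (r1 / a + r2 / a + r3 / b) - (- r1 / a - r2 / a + r3 / b) = 4 * u / a + 4 * w / b"
    using assms by (simp add: field_simps)
  have h2: "3 * (- (r1+u) / a - (r2+u) / a + (r3+w) / b)
            + ((r1+u) / a + (r2+u) / a + (r3+w) / b)
            - 3 * (- r1 / a - r2 / a + r3 / b) - (r1 / a + r2 / a + r3 / b) = - 4 * u / a + 4 * w / b"
    using assms by (simp add: field_simps)
  define G where "G = a*n+b*m"
  define T where "T = -a*n+b*m"
  have G: "G \<noteq> 0" and T: "T \<noteq> 0" using assms by (auto simp: G_def T_def)
  have e1: "1 / (T / G) * (X / G) = X / T" using G T by (simp add: field_simps)
  have e2: "1 / (8 * (T / G)) * (4 * u / a + 4 * w / b) = G * (4 * u / a + 4 * w / b) / (8 * T)"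
    using G T by (simp add: field_simps)
  have key: "G * (4 * u / a + 4 * w / b) + T * (- 4 * u / a + 4 * w / b) = 8 * (u * n + w * m)"
  proof -
    have "G * (4 * u / a + 4 * w / b) + T * (- 4 * u / a + 4 * w / b)
        = (G - T) * (4 * u / a) + (G + T) * (4 * w / b)" by (simp add: algebra_simps diff_divide_distrib add_divide_distrib)
    also have "\<dots> = (2*a*n) * (4 * u / a) + (2*b*m) * (4 * w / b)" by (simp add: G_def T_def)
    also have "\<dots> = 8 * (u * n + w * m)" using assms(1,2) by (simp add: field_simps)
    finally show ?thesis .
  qed
  have e3: "G * (4 * u / a + 4 * w / b) / (8 * T) + 1 / 8 * (- 4 * u / a + 4 * w / b) = (u * n + w * m) / T"
  proof -
    have "G * (4 * u / a + 4 * w / b) / (8 * T) + 1 / 8 * (- 4 * u / a + 4 * w / b)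
       = (G * (4 * u / a + 4 * w / b) + T * (- 4 * u / a + 4 * w / b)) / (8 * T)"
      using T by (simp add: field_simps)
    also have "\<dots> = (u * n + w * m) / T" unfolding key using T by (simp add: field_simps)
    finally show ?thesis .
  qed
  have "(X + u * n + w * m) / T = X / T + (u * n + w * m) / T" by (simp add: add_divide_distrib)
  then show ?thesis unfolding h1 h2 G_def[symmetric] T_def[symmetric] e1 e2
    using e3 by simp
qed


theorem theorem5p5:
  fixes U :: "(real^3) set" and A B :: "real^3 \<Rightarrow> real" and p x :: "real^3"
  assumes "open U" and "p \<in> U"
    and "smooth_on U A" and "smooth_on U B"
    and "\<forall>q\<in>U. A q > 0" and "\<forall>q\<in>U. B q > 0"
    and "Q_basis x"
    and "gangle (gmet A B p) x (Pm *v x) \<noteq> pi / 2"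
  shows "let g = gmet A B; gt = tmet A B; \<psi> = gangle (g p) x (Pm *v x);
             \<tau> = contr (ginv g p) (ricci g p);
             \<tau>s = contr (ginv gt p) (ricci g p);
             \<tau>t = contr (ginv gt p) (ricci gt p);
             \<tau>ts = contr (ginv g p) (ricci gt p)
         in ricdir gt p x =
              1 / cos \<psi> * ricdir g p x
              + 1 / (8 * cos \<psi>) * (3 * \<tau>ts + \<tau>t - 3 * \<tau> - \<tau>s)
              + 1 / 8 * (3 * \<tau>t + \<tau>ts - 3 * \<tau>s - \<tau>)"
proof -
  define D1 where "D1 = (\<lambda>q (i::3). if i = 3 then B q else A q)"
  define D2 where "D2 = (\<lambda>q (i::3). if i = 3 then B q else - A q)"
  obtain u w where R: "ricci (dg D2) p = ricci (dg D1) p + (\<chi> a b. if a = b then (if a = 3 then w else u) else 0)"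
    using main_ricci[OF assms(1-6)] unfolding D1_def D2_def by blast
  define a where "a = A p"
  define b where "b = B p"
  have a: "a > 0" and b: "b > 0" using assms(2,5,6) by (auto simp: a_def b_def)
  have nz1: "\<And>i. D1 p i \<noteq> 0" and nz2: "\<And>i. D2 p i \<noteq> 0" using a b by (auto simp: D1_def D2_def a_def b_def)
  have "x \<noteq> 0"
  proof
    assume "x = 0"
    then have "dependent {x, Qm *v x, Pm *v x}" by (simp add: dependent_zero)
    then show False using assms(7) unfolding Q_basis_def Let_def by blast
  qed
  then have xnz: "x $ 1 \<noteq> 0 \<or> x $ 2 \<noteq> 0 \<or> x $ 3 \<noteq> 0" by (auto simp: vec_eq_iff forall_3)
  define n where "n = (x $ 1)^2 + (x $ 2)^2"
  define m where "m = (x $ 3)^2"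
  have n0: "n \<ge> 0" "m \<ge> 0" by (auto simp: n_def m_def)
  have nm: "n > 0 \<or> m > 0" using xnz by (auto simp: n_def m_def add_pos_nonneg add_nonneg_pos)
  define G where "G = a * n + b * m"
  define T where "T = - a * n + b * m"
  have Gpos: "G > 0" using nm n0 a b by (auto simp: G_def add_pos_nonneg add_nonneg_pos)
  have bG: "bil (dg D1 p) x x = G"
    by (simp add: bil_def dg_def D1_def inner_vec_def matrix_vector_mult_def sum_3 G_def n_def m_def a_def b_def power2_eq_square algebra_simps)
  have bT: "bil (dg D2 p) x x = T"
    by (simp add: bil_def dg_def D2_def inner_vec_def matrix_vector_mult_def sum_3 T_def n_def m_def a_def b_def power2_eq_square algebra_simps)
  have b1: "bil (dg D1 p) x (Pm *v x) = T"
    by (simp add: bil_def dg_def D1_def Pm_eq inner_vec_def matrix_vector_mult_def sum_3 T_def n_def m_def a_def b_def power2_eq_square algebra_simps)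
  have b2: "bil (dg D1 p) (Pm *v x) (Pm *v x) = G"
    by (simp add: bil_def dg_def D1_def Pm_eq inner_vec_def matrix_vector_mult_def sum_3 G_def n_def m_def a_def b_def power2_eq_square algebra_simps)
  have le: "\<bar>T / G\<bar> \<le> 1" using Gpos a b n0 by (auto simp: T_def G_def abs_le_iff divide_le_eq le_divide_eq)
  have ang: "gangle (dg D1 p) x (Pm *v x) = arccos (T / G)"
    unfolding gangle_def b1 b2 bG using Gpos by (simp add: real_sqrt_mult_self)
  have cosang: "cos (gangle (dg D1 p) x (Pm *v x)) = T / G"
    unfolding ang proof (rule cos_arccos)
    show "- 1 \<le> T / G" "T / G \<le> 1" using le unfolding abs_le_iff by auto
  qed
  have "T \<noteq> 0" using assms(8) unfolding gmet_dg D1_def[symmetric] ang by auto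
  define r where "r = ricci (dg D1) p"
  have Rx: "bil (ricci (dg D2) p) x x = bil r x x + u * n + w * m"
    unfolding R r_def[symmetric]
    by (simp add: bil_def inner_vec_def matrix_vector_mult_def sum_3 n_def m_def power2_eq_square algebra_simps)
  have t1: "contr (ginv (dg D1) p) r = r$1$1 / a + r$2$2 / a + r$3$3 / b"
    unfolding contr_def ginv_dg[of D1 p, OF nz1] by (simp add: sum_3 D1_def a_def b_def)
  have t2: "contr (ginv (dg D2) p) r = - r$1$1 / a - r$2$2 / a + r$3$3 / b"
    unfolding contr_def ginv_dg[of D2 p, OF nz2] using a b by (simp add: sum_3 D2_def a_def b_def field_simps)
  have t3: "contr (ginv (dg D1) p) (ricci (dg D2) p) = (r$1$1+u) / a + (r$2$2+u) / a + (r$3$3+w) / b"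
    unfolding R r_def[symmetric] contr_def ginv_dg[of D1 p, OF nz1] by (simp add: sum_3 D1_def a_def b_def)
  have t4: "contr (ginv (dg D2) p) (ricci (dg D2) p) = - (r$1$1+u) / a - (r$2$2+u) / a + (r$3$3+w) / b"
    unfolding R r_def[symmetric] contr_def ginv_dg[of D2 p, OF nz2] using a b by (simp add: sum_3 D2_def a_def b_def field_simps)
  have "bil (ricci (dg D2) p) x x / T = 1 / (T / G) * (bil r x x / G)
      + 1 / (8 * (T / G)) * (3 * ((r$1$1+u) / a + (r$2$2+u) / a + (r$3$3+w) / b)
            + (- (r$1$1+u) / a - (r$2$2+u) / a + (r$3$3+w) / b)
            - 3 * (r$1$1 / a + r$2$2 / a + r$3$3 / b) - (- r$1$1 / a - r$2$2 / a + r$3$3 / b))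
      + 1 / 8 * (3 * (- (r$1$1+u) / a - (r$2$2+u) / a + (r$3$3+w) / b)
            + ((r$1$1+u) / a + (r$2$2+u) / a + (r$3$3+w) / b)
            - 3 * (- r$1$1 / a - r$2$2 / a + r$3$3 / b) - (r$1$1 / a + r$2$2 / a + r$3$3 / b))"
    unfolding Rx T_def G_def
    by (rule final_alg) (use \<open>T \<noteq> 0\<close> Gpos a b in \<open>auto simp: T_def G_def\<close>)
  then show ?thesis
    unfolding Let_def gmet_dg tmet_dg D1_def[symmetric] D2_def[symmetric] ricdir_def
      cosang t1 t2 t3 t4 bT bG r_def[symmetric] .
qed

end
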